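(* Let $A_1,\dots,A_5$ be linearly independent symmetric $5\times5$ complex matrices such that $\tilde X=\{([z],[w])\in\mathbb{P}^4\times\mathbb{P}^4:{}^tzA_iw=0,\ i=1,\dots,5\}$ is a smooth threefold. Let $H=\{[y]\in\mathbb{P}^4:\det(\sum y_iA_i)=0\}$ and $U=\{([y],[w])\in H\times\mathbb{P}^4:(\sum y_iA_i)w=0\}$. Then $U$ is smooth. *)

theory Defs
  imports "HOL-Analysis.Analysis"
begin

definition mat_comb :: "complex^5 \<Rightarrow> (5 \<Rightarrow> complex^5^5) \<Rightarrow> complex^5^5" where
  "mat_comb y A = (\<chi> r s. \<Sum>i\<in>UNIV. y $ i * (A i $ r $ s))"

definition mats_lin_indep :: "(5 \<Rightarrow> complex^5^5) \<Rightarrow> bool" where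
  "mats_lin_indep A \<longleftrightarrow> (\<forall>c. mat_comb c A = 0 \<longrightarrow> c = 0)"

definition sym_mat :: "complex^5^5 \<Rightarrow> bool" where
  "sym_mat M \<longleftrightarrow> transpose M = M"

definition eqs_X :: "(5 \<Rightarrow> complex^5^5) \<Rightarrow> (complex^5) \<times> (complex^5) \<Rightarrow> complex^5" where
  "eqs_X A = (\<lambda>(z, w). \<chi> i. \<Sum>r\<in>UNIV. z $ r * ((A i *v w) $ r))"

definition eqs_U :: "(5 \<Rightarrow> complex^5^5) \<Rightarrow> (complex^5) \<times> (complex^5) \<Rightarrow> complex^5" where
  "eqs_U A = (\<lambda>(y, w). mat_comb y A *v w)"

text \<open>The subvariety of P^4 x P^4 cut out by five bihomogeneous equations F
  (at points additionally satisfying the side condition P) is smooth of the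
  expected dimension 8 - 5 = 3: at every point ([a],[b]) of it (a, b nonzero
  representatives) the Jacobian of F on the affine cone C^5 x C^5 has full
  rank 5, i.e. the derivative is surjective (Jacobian criterion).\<close>
definition smooth_ci_P4P4 ::
  "((complex^5) \<times> (complex^5) \<Rightarrow> complex^5) \<Rightarrow> ((complex^5) \<times> (complex^5) \<Rightarrow> bool) \<Rightarrow> bool" where
  "smooth_ci_P4P4 F P \<longleftrightarrow>
     (\<forall>a b. a \<noteq> 0 \<and> b \<noteq> 0 \<and> P (a, b) \<and> F (a, b) = 0 \<longrightarrow>
        (\<exists>L. (F has_derivative L) (at (a, b)) \<and> surj L))"

end

theory Submission
  imports Defs
begin

lemma scR_c: "c *\<^sub>R (z::complex) = of_real c * z"
  by (simp add: scaleR_conv_of_real)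

definition pairing :: "complex^5 \<Rightarrow> complex^5 \<Rightarrow> complex" where
  "pairing u x = (\<Sum>r\<in>UNIV. u $ r * x $ r)"

definition hX :: "(5 \<Rightarrow> complex^5^5) \<Rightarrow> complex^5 \<Rightarrow> complex^5 \<Rightarrow> complex^5" where
  "hX A z w = (\<chi> i. \<Sum>r\<in>UNIV. z $ r * ((A i *v w) $ r))"

definition hU :: "(5 \<Rightarrow> complex^5^5) \<Rightarrow> complex^5 \<Rightarrow> complex^5 \<Rightarrow> complex^5" where
  "hU A y w = mat_comb y A *v w"

lemma hX_bilinear: "bilinear (hX A)"
  unfolding bilinear_def
proof safe
  fix x show "linear (hX A x)"
    by (rule linearI) (simp_all add: hX_def vec_eq_iff matrix_vector_mult_def
        sum.distrib sum_distrib_left algebra_simps scR_c)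
next
  fix y show "linear (\<lambda>x. hX A x y)"
    by (rule linearI) (simp_all add: hX_def vec_eq_iff matrix_vector_mult_def
        sum.distrib sum_distrib_left algebra_simps scR_c)
qed

lemma hU_bilinear: "bilinear (hU A)"
  unfolding bilinear_def
proof safe
  fix x show "linear (hU A x)"
    by (rule linearI) (simp_all add: hU_def mat_comb_def vec_eq_iff matrix_vector_mult_def
        sum.distrib sum_distrib_left algebra_simps scR_c)
next
  fix y show "linear (\<lambda>x. hU A x y)"
    by (rule linearI) (simp_all add: hU_def mat_comb_def vec_eq_iff matrix_vector_mult_def
        sum.distrib sum_distrib_left sum_distrib_right algebra_simps scR_c)
qed

lemma bb: fixes h :: "'a::euclidean_space \<Rightarrow> 'b::euclidean_space \<Rightarrow> 'c::euclidean_space"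
  assumes "bilinear h" shows "bounded_bilinear h"
  using assms by (simp add: bilinear_conv_bounded_bilinear)
lemma bilin_deriv:
  fixes h :: "'a::euclidean_space \<Rightarrow> 'b::euclidean_space \<Rightarrow> 'c::euclidean_space"
  assumes "bounded_bilinear h"
  shows "((\<lambda>p. h (fst p) (snd p)) has_derivative (\<lambda>d. h (fst p0) (snd d) + h (fst d) (snd p0))) (at p0)"
  by (rule bounded_bilinear.FDERIV[OF assms has_derivative_fst[OF has_derivative_ident]
        has_derivative_snd[OF has_derivative_ident]])

lemma eqs_X_eq: "eqs_X A = (\<lambda>p. hX A (fst p) (snd p))"
  by (auto simp: eqs_X_def hX_def fun_eq_iff split_def)

lemma eqs_U_eq: "eqs_U A = (\<lambda>p. hU A (fst p) (snd p))"
  by (auto simp: eqs_U_def hU_def fun_eq_iff split_def)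

lemma key_sum: "(\<Sum>i\<in>UNIV. y $ i * (\<Sum>r\<in>UNIV. z $ r * (A i *v v) $ r)) = pairing z (mat_comb y A *v v)"
proof -
  have "(\<Sum>i\<in>UNIV. y $ i * (\<Sum>r\<in>UNIV. z $ r * (A i *v v) $ r))
     = (\<Sum>i\<in>UNIV. \<Sum>r\<in>UNIV. \<Sum>s\<in>UNIV. y $ i * z $ r * A i $ r $ s * v $ s)"
    by (simp add: matrix_vector_mult_def sum_distrib_left mult.assoc)
  also have "\<dots> = (\<Sum>r\<in>UNIV. \<Sum>i\<in>UNIV. \<Sum>s\<in>UNIV. y $ i * z $ r * A i $ r $ s * v $ s)"
    by (rule sum.swap)
  also have "\<dots> = (\<Sum>r\<in>UNIV. \<Sum>s\<in>UNIV. \<Sum>i\<in>UNIV. y $ i * z $ r * A i $ r $ s * v $ s)"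
    by (rule sum.cong[OF refl], rule sum.swap)
  also have "\<dots> = pairing z (mat_comb y A *v v)"
    by (simp add: pairing_def mat_comb_def matrix_vector_mult_def sum_distrib_left sum_distrib_right mult_ac)
  finally show ?thesis .
qed

lemma inner_pairing: "a \<bullet> x = Re (pairing (\<chi> r. cnj (a $ r)) x)"
  by (simp add: inner_vec_def inner_complex_def pairing_def Re_sum)

lemma pairing_add: "pairing u (x + x') = pairing u x + pairing u x'"
  by (simp add: pairing_def algebra_simps sum.distrib)

lemma pairing_scale: "pairing u (\<chi> r. c * x $ r) = c * pairing u x"
  by (simp add: pairing_def sum_distrib_left mult_ac)

lemma hU_scale1: "hU A (\<chi> r. c * y $ r) w = (\<chi> r. c * hU A y w $ r)"
  by (simp add: hU_def mat_comb_def matrix_vector_mult_def vec_eq_iff sum_distrib_left sum_distrib_right mult_ac)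

lemma hU_scale2: "hU A y (\<chi> r. c * w $ r) = (\<chi> r. c * hU A y w $ r)"
  by (simp add: hU_def matrix_vector_mult_def vec_eq_iff sum_distrib_left mult_ac)

lemma vec_scale_add: "(\<chi> r. c * (x + x') $ r) = (\<chi> r. c * x $ r) + (\<chi> r. (c::complex) * x' $ r)"
  by (simp add: vec_eq_iff algebra_simps)

lemma mat_comb_axis: "mat_comb (axis i 1) A = A i"
proof -
  have "\<And>r s. (\<Sum>j\<in>UNIV. axis i 1 $ j * A j $ r $ s) = A i $ r $ s"
  proof -
    fix r s
    have "(\<Sum>j\<in>UNIV. axis i 1 $ j * A j $ r $ s) = (\<Sum>j\<in>UNIV. if j = i then A j $ r $ s else 0)"
      by (rule sum.cong) (auto simp: axis_def)
    also have "\<dots> = A i $ r $ s" by simp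
    finally show "(\<Sum>j\<in>UNIV. axis i 1 $ j * A j $ r $ s) = A i $ r $ s" .
  qed
  then show ?thesis by (simp add: mat_comb_def vec_eq_iff)
qed

lemma sum_axis: "(\<Sum>i\<in>UNIV. (y::complex^5) $ i * axis i0 1 $ i) = y $ i0"
proof -
  have "(\<Sum>i\<in>UNIV. y $ i * axis i0 1 $ i) = (\<Sum>i\<in>UNIV. if i = i0 then y $ i else 0)"
    by (rule sum.cong) (auto simp: axis_def)
  then show ?thesis by simp
qed

theorem claim3p7:
  fixes A :: "5 \<Rightarrow> complex^5^5"
  assumes "mats_lin_indep A"
    and "\<forall>i. sym_mat (A i)"
    and "smooth_ci_P4P4 (eqs_X A) (\<lambda>_. True)"
  shows "smooth_ci_P4P4 (eqs_U A) (\<lambda>(y, w). det (mat_comb y A) = 0)"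
  unfolding smooth_ci_P4P4_def
proof (intro allI impI)
  fix y w :: "complex^5"
  assume H: "y \<noteq> 0 \<and> w \<noteq> 0 \<and> (\<lambda>(y, w). det (mat_comb y A) = 0) (y, w) \<and> eqs_U A (y, w) = 0"
  hence y0: "y \<noteq> 0" and w0: "w \<noteq> 0" and Mw: "mat_comb y A *v w = 0"
    by (auto simp: eqs_U_def)
  define L where "L = (\<lambda>d. hU A y (snd d) + hU A (fst d) w)"
  have D: "(eqs_U A has_derivative L) (at (y,w))"
    unfolding eqs_U_eq L_def using bilin_deriv[OF bb[OF hU_bilinear], of A "(y,w)"] by (simp only: fst_conv snd_conv)
  have "surj L"
  proof (rule ccontr)
    assume ns: "\<not> surj L"
    have lin: "linear L" using has_derivative_bounded_linear[OF D] bounded_linear.linear by blast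
    have sp: "span (range L) = range L"
      using span_linear_image[OF lin, of UNIV] by simp
    have "dim (range L) \<noteq> DIM(complex^5)"
    proof
      assume "dim (range L) = DIM(complex^5)"
      hence "span (range L) = UNIV" using dim_eq_full by blast
      hence "range L = UNIV" using sp by simp
      thus False using ns by simp
    qed
    hence "dim (range L) < DIM(complex^5)" using dim_subset_UNIV le_neq_implies_less by blast
    then obtain a :: "complex^5" where a0: "a \<noteq> 0" and ah: "span (range L) \<subseteq> {x. a \<bullet> x = 0}"
      using lowdim_subset_hyperplane by blast
    have aL: "\<And>d. a \<bullet> L d = 0" using ah span_superset by blast
    define u where "u = (\<chi> r. cnj (a $ r))"
    have u0: "u \<noteq> 0"
    proof
      assume "u = 0"
      hence "\<And>r. a $ r = 0" by (simp add: u_def vec_eq_iff)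
      thus False using a0 by (simp add: vec_eq_iff)
    qed
    have ReP: "\<And>d. Re (pairing u (L d)) = 0" using aL by (simp only: inner_pairing u_def)
    have Lsc: "\<And>dy dw. L ((\<chi> r. \<i> * dy $ r), (\<chi> r. \<i> * dw $ r)) = (\<chi> r. \<i> * L (dy, dw) $ r)"
      by (simp add: L_def hU_scale1 hU_scale2 vec_eq_iff algebra_simps)
    have P0: "\<And>d. pairing u (L d) = 0"
    proof -
      fix d :: "(complex^5) \<times> (complex^5)"
      obtain dy dw where d: "d = (dy, dw)" by fastforce
      have "Re (\<i> * pairing u (L d)) = 0"
        using ReP[of "((\<chi> r. \<i> * dy $ r), (\<chi> r. \<i> * dw $ r))"] by (simp only: Lsc pairing_scale d)
      hence "Im (pairing u (L d)) = 0" by simp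
      thus "pairing u (L d) = 0" using ReP[of d] by (simp add: complex_eq_iff)
    qed
    have Q1: "\<And>dw. pairing u (hU A y dw) = 0"
    proof -
      fix dw
      have "pairing u (L (0, dw)) = 0" by (rule P0)
      thus "pairing u (hU A y dw) = 0" by (simp add: L_def bilinear_lzero[OF hU_bilinear])
    qed
    have Q2: "\<And>i. pairing u (A i *v w) = 0"
    proof -
      fix i
      have "pairing u (L (axis i 1, 0)) = 0" by (rule P0)
      thus "pairing u (A i *v w) = 0"
        by (simp add: L_def bilinear_rzero[OF hU_bilinear] hU_def mat_comb_axis)
    qed
    have X0: "eqs_X A (u, w) = 0"
      using Q2 by (simp add: eqs_X_def vec_eq_iff pairing_def)
    obtain L' where DL': "(eqs_X A has_derivative L') (at (u, w))" and sL': "surj L'"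
      using assms(3) u0 w0 X0 unfolding smooth_ci_P4P4_def by blast
    define L0 where "L0 = (\<lambda>d. hX A u (snd d) + hX A (fst d) w)"
    have D0: "(eqs_X A has_derivative L0) (at (u,w))"
      unfolding eqs_X_eq L0_def using bilin_deriv[OF bb[OF hX_bilinear], of A "(u,w)"] by (simp only: fst_conv snd_conv)
    have "L' = L0" using has_derivative_unique[OF DL' D0] .
    hence sL0: "surj L0" using sL' by simp
    obtain i0 where yi0: "y $ i0 \<noteq> 0" using y0 by (auto simp: vec_eq_iff)
    obtain d where dd: "L0 d = axis i0 1" using sL0 by (metis surjD)
    obtain dz dw where d: "d = (dz, dw)" by fastforce
    have "(\<Sum>i\<in>UNIV. y $ i * L0 d $ i)
        = (\<Sum>i\<in>UNIV. y $ i * (\<Sum>r\<in>UNIV. u $ r * (A i *v dw) $ r))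
          + (\<Sum>i\<in>UNIV. y $ i * (\<Sum>r\<in>UNIV. dz $ r * (A i *v w) $ r))"
      by (simp add: L0_def d hX_def algebra_simps sum.distrib)
    also have "\<dots> = pairing u (mat_comb y A *v dw) + pairing dz (mat_comb y A *v w)"
      by (simp only: key_sum)
    also have "\<dots> = 0" using Q1[of dw] Mw by (simp add: hU_def pairing_def)
    finally have "(\<Sum>i\<in>UNIV. y $ i * L0 d $ i) = 0" .
    moreover have "(\<Sum>i\<in>UNIV. y $ i * L0 d $ i) = y $ i0" using dd sum_axis by simp
    ultimately show False using yi0 by simp
  qed
  thus "\<exists>L. (eqs_U A has_derivative L) (at (y, w)) \<and> surj L" using D by blast
qed

end
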